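(* Let Assumptions 1, 2 and 3 hold with $\|\cdot\|=\|\cdot\|_*=\|\cdot\|_2$. Run the Robust Stochastic Approximation algorithm for $N-1$ iterations from $x_1\in X$ with constant stepsizes $\gamma_\tau=\gamma=\dfrac{D_X}{\sqrt{2(M_2^2+L^2)}\sqrt N}$, $\tau=1,\dots,N$, where $D_X=\max_{x\in X}\|x-x_1\|_2$. Then the estimate $g^N=\frac1N\sum_{\tau=1}^N g(x_\tau,\xi_\tau)$ satisfies $$\mathbb E\big[|g^N-f(x_* )|\big]\le\frac{M_1+D_X\sqrt{2(M_2^2+L^2)}}{\sqrt N}.$$
   Context: Setting: $E=\mathbb R^n$; $X\subset E$ nonempty closed bounded convex; $\xi$ a random vector with support $\Xi$; $g(x,\xi)$ Borel, convex in $x$, integrable in $\xi$; $f(x)=\mathbb E[g(x,\xi)]$ is convex and Lipschitz on $X$, and $x_*$ is a minimizer of $f$ over $X$. $\xi_1,\xi_2,\dots$ are i.i.d. copies of $\xi$. A stochastic oracle, queried at $x$ at time $t$, returns $g(x,\xi_t)$ and a measurable selection $G(x,\xi_t)\in\partial_xg(x,\xi_t)$. Let $f'(x):=\mathbb E[G(x,\xi)]$, $\delta(x,\xi)=g(x,\xi)-f(x)$, $\Delta(x,\xi)=G(x,\xi)-f'(x)$. Assumption 1: $\|f'(x)\|_*\le L$ for all $x\in X$ and all subgradients $f'(x)$. Assumption 2: $f(x)=\mathbb E[g(x,\xi)]$ and $\mathbb E[G(x,\xi)]\in\partial f(x)$ for all $x\in X$. Assumption 3: for all $x\in X$, $\mathbb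 E[\delta^2(x,\xi)]\le M_1^2$ and $\mathbb E[\|\Delta(x,\xi)\|_*^2]\le M_2^2$, with $M_1,M_2\in(0,\infty)$. RSA algorithm: $x_{t+1}=\Pi_X(x_t-\gamma_tG(x_t,\xi_t))$, $t=1,\dots,N-1$, where $\Pi_X$ is the Euclidean projection onto $X$. *)

theory Defs
  imports "HOL-Analysis.Analysis" "HOL-Probability.Probability"
begin

definition is_subgradient :: "('a::euclidean_space \<Rightarrow> real) \<Rightarrow> 'a \<Rightarrow> 'a \<Rightarrow> bool" where
  "is_subgradient h x v \<longleftrightarrow> (\<forall>y. h y \<ge> h x + inner v (y - x))"

text \<open>Robust Stochastic Approximation iterates with constant stepsize gam.
  rsa X G gam x1 xi k is the point x_(k+1); x_1 = x1 and
  x_(k+2) = Proj_X (x_(k+1) - gam * G(x_(k+1), xi_(k+1))).\<close>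
primrec rsa :: "'a::euclidean_space set \<Rightarrow> ('a \<Rightarrow> 'b \<Rightarrow> 'a) \<Rightarrow> real \<Rightarrow> 'a \<Rightarrow> (nat \<Rightarrow> 'b) \<Rightarrow> nat \<Rightarrow> 'a" where
  "rsa X G gam x1 xi 0 = x1"
| "rsa X G gam x1 xi (Suc k) =
     closest_point X (rsa X G gam x1 xi k - gam *\<^sub>R G (rsa X G gam x1 xi k) (xi (Suc k)))"

end

theory Submission
  imports Defs
begin

lemma tonelli_indep:
  fixes \<xi> :: "nat \<Rightarrow> 'm \<Rightarrow> 'b"
  assumes probM: "prob_space M" and probP: "prob_space P"
    and xi_rv: "\<And>t. \<xi> t \<in> measurable M P"
    and xi_distr: "\<And>t. distr M P (\<xi> t) = P"
    and xi_indep: "prob_space.indep_vars M (\<lambda>_. P) \<xi> UNIV"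
    and h: "h \<in> borel_measurable (PiM {..<n} (\<lambda>_. P) \<Otimes>\<^sub>M P)"
  shows "(\<integral>\<^sup>+\<omega>. h (restrict (\<lambda>i. \<xi> i \<omega>) {..<n}, \<xi> n \<omega>) \<partial>M)
       = (\<integral>\<^sup>+y. (\<integral>\<^sup>+s. h (y, s) \<partial>P) \<partial>distr M (PiM {..<n} (\<lambda>_. P)) (\<lambda>\<omega>. restrict (\<lambda>i. \<xi> i \<omega>) {..<n}))"
proof -
  interpret M: prob_space M by fact
  interpret P: prob_space P by fact
  let ?Q = "PiM {..<n} (\<lambda>_. P)"
  let ?Y = "\<lambda>\<omega>. restrict (\<lambda>i. \<xi> i \<omega>) {..<n}"
  have iv: "M.indep_var ?Q ?Y (PiM {n} (\<lambda>_. P)) (\<lambda>\<omega>. restrict (\<lambda>i. \<xi> i \<omega>) {n})"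
    by (rule M.indep_var_restrict[OF xi_indep]) auto
  let ?Z = "\<lambda>\<omega>. restrict (\<lambda>i. \<xi> i \<omega>) {n}"
  let ?R = "PiM {n} (\<lambda>_. P)"
  have eq: "distr M ?Q ?Y \<Otimes>\<^sub>M distr M ?R ?Z = distr M (?Q \<Otimes>\<^sub>M ?R) (\<lambda>\<omega>. (?Y \<omega>, ?Z \<omega>))"
    using iv unfolding M.indep_var_distribution_eq by blast
  have mY: "?Y \<in> measurable M ?Q"
    by (intro measurable_restrict) (simp add: xi_rv)
  have mZ: "?Z \<in> measurable M ?R"
    by (intro measurable_restrict) (simp add: xi_rv)
  have mn: "(\<lambda>z. z n) \<in> measurable ?R P" by (rule measurable_component_singleton) simp
  have h': "(\<lambda>w. h (fst w, snd w n)) \<in> borel_measurable (?Q \<Otimes>\<^sub>M ?R)"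
    by (rule measurable_compose[OF _ h]) (auto intro!: measurable_Pair measurable_compose[OF measurable_snd mn])
  have inner: "\<And>y. y \<in> space ?Q \<Longrightarrow> (\<integral>\<^sup>+z. h (y, z n) \<partial>distr M ?R ?Z) = (\<integral>\<^sup>+s. h (y, s) \<partial>P)"
  proof -
    fix y assume y: "y \<in> space ?Q"
    have "distr (distr M ?R ?Z) P (\<lambda>z. z n) = distr M P (\<lambda>\<omega>. ?Z \<omega> n)"
      by (rule distr_distr[OF mn mZ, unfolded o_def])
    also have "\<dots> = distr M P (\<xi> n)" by simp
    finally have d: "distr (distr M ?R ?Z) P (\<lambda>z. z n) = P" using xi_distr by simp
    have "(\<integral>\<^sup>+s. h (y, s) \<partial>P) = (\<integral>\<^sup>+s. h (y, s) \<partial>distr (distr M ?R ?Z) P (\<lambda>z. z n))"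
      by (simp add: d)
    also have "\<dots> = (\<integral>\<^sup>+z. h (y, z n) \<partial>distr M ?R ?Z)"
      by (rule nn_integral_distr) (use mn measurable_Pair2[OF h y] in auto)
    finally show "?thesis y" by simp
  qed
  have h'': "(\<lambda>w. h (fst w, snd w n)) \<in> borel_measurable (distr M ?Q ?Y \<Otimes>\<^sub>M distr M ?R ?Z)"
    using h' measurable_cong_sets[OF sets_pair_measure_cong[OF sets_distr sets_distr] refl] by blast
  interpret R: prob_space "distr M ?R ?Z" by (rule M.prob_space_distr[OF mZ])
  have "(\<integral>\<^sup>+\<omega>. h (?Y \<omega>, \<xi> n \<omega>) \<partial>M) = (\<integral>\<^sup>+\<omega>. (\<lambda>w. h (fst w, snd w n)) (?Y \<omega>, ?Z \<omega>) \<partial>M)"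
    by simp
  also have "\<dots> = (\<integral>\<^sup>+w. (\<lambda>w. h (fst w, snd w n)) w \<partial>distr M (?Q \<Otimes>\<^sub>M ?R) (\<lambda>\<omega>. (?Y \<omega>, ?Z \<omega>)))"
    by (subst nn_integral_distr) (auto intro!: measurable_Pair mY mZ h')
  also have "\<dots> = (\<integral>\<^sup>+w. (\<lambda>w. h (fst w, snd w n)) w \<partial>(distr M ?Q ?Y \<Otimes>\<^sub>M distr M ?R ?Z))" by (simp add: eq)
  also have "\<dots> = (\<integral>\<^sup>+y. (\<integral>\<^sup>+z. h (y, z n) \<partial>distr M ?R ?Z) \<partial>distr M ?Q ?Y)"
    by (subst R.nn_integral_fst[OF h'', symmetric]) simp
  also have "\<dots> = (\<integral>\<^sup>+y. (\<integral>\<^sup>+s. h (y, s) \<partial>P) \<partial>distr M ?Q ?Y)"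
    by (rule nn_integral_cong) (simp add: inner)
  finally show ?thesis .
qed


lemma rsa_in:
  assumes "closed X" "X \<noteq> {}" "x1 \<in> X"
  shows "rsa X G gam x1 z k \<in> X"
  by (cases k) (auto simp: assms closest_point_in_set)

lemma rsa_local:
  assumes "\<And>t. t \<le> k \<Longrightarrow> z t = z' t"
  shows "rsa X G gam x1 z k = rsa X G gam x1 z' k"
  using assms by (induction k) auto

lemma rsa_meas:
  fixes G :: "'a::euclidean_space \<Rightarrow> 'b \<Rightarrow> 'a"
  assumes G_meas: "(\<lambda>(x, s). G x s) \<in> borel_measurable (borel \<Otimes>\<^sub>M P)"
    and X: "convex X" "closed X" "X \<noteq> {}"
  shows "k < n \<Longrightarrow> (\<lambda>y. rsa X G gam x1 y k) \<in> borel_measurable (PiM {..<n} (\<lambda>_. P))"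
proof (induction k)
  case 0
  then show ?case by simp
next
  case (Suc k)
  then have r: "(\<lambda>y. rsa X G gam x1 y k) \<in> borel_measurable (PiM {..<n} (\<lambda>_. P))" by simp
  have c: "(\<lambda>y. y (Suc k)) \<in> measurable (PiM {..<n} (\<lambda>_. P)) P"
    using Suc.prems by (intro measurable_component_singleton) auto
  have "(\<lambda>y. (rsa X G gam x1 y k, y (Suc k))) \<in> measurable (PiM {..<n} (\<lambda>_. P)) (borel \<Otimes>\<^sub>M P)"
    using r c by (rule measurable_Pair)
  from measurable_compose[OF this G_meas]
  have g: "(\<lambda>y. G (rsa X G gam x1 y k) (y (Suc k))) \<in> borel_measurable (PiM {..<n} (\<lambda>_. P))"
    by simp
  have "(\<lambda>y. closest_point X (rsa X G gam x1 y k - gam *\<^sub>R G (rsa X G gam x1 y k) (y (Suc k))))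
      \<in> borel_measurable (PiM {..<n} (\<lambda>_. P))"
    by (rule borel_measurable_continuous_on[OF continuous_on_closest_point[OF X]])
       (intro borel_measurable_diff borel_measurable_scaleR r g borel_measurable_const)
  then show ?case by simp
qed


lemma var_bound:
  fixes D :: "'b \<Rightarrow> 'a::euclidean_space"
  assumes V0: "0 \<le> V" and P: "prob_space P" and int: "integrable P D" and z: "(\<integral>s. D s \<partial>P) = 0"
    and V: "(\<integral>\<^sup>+ s. ennreal ((norm (D s))\<^sup>2) \<partial>P) \<le> ennreal V"
  shows "(\<integral>\<^sup>+ s. ennreal ((norm (w + c *\<^sub>R D s))\<^sup>2) \<partial>P) \<le> ennreal ((norm w)\<^sup>2 + c\<^sup>2 * V)"
proof -
  interpret prob_space P by fact
  have mD: "D \<in> borel_measurable P" using int by simp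
  have mN: "(\<lambda>s. (norm (D s))\<^sup>2) \<in> borel_measurable P" using mD by measurable
  have fin: "(\<integral>\<^sup>+ s. ennreal ((norm (D s))\<^sup>2) \<partial>P) < \<infinity>"
    by (rule le_less_trans[OF V]) simp
  have iN: "integrable P (\<lambda>s. (norm (D s))\<^sup>2)"
    by (rule integrableI_nonneg[OF mN _ fin]) auto
  have eqN: "(\<integral>\<^sup>+ s. ennreal ((norm (D s))\<^sup>2) \<partial>P) = ennreal (\<integral>s. (norm (D s))\<^sup>2 \<partial>P)"
    by (rule nn_integral_eq_integral[OF iN]) auto
  have IV: "(\<integral>s. (norm (D s))\<^sup>2 \<partial>P) \<le> V"
  proof -
    have "ennreal (\<integral>s. (norm (D s))\<^sup>2 \<partial>P) \<le> ennreal V" using V eqN by simp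
    moreover have "0 \<le> (\<integral>s. (norm (D s))\<^sup>2 \<partial>P)" by simp
    ultimately show ?thesis
      using V0 by simp
  qed
  have expand: "\<And>s. (norm (w + c *\<^sub>R D s))\<^sup>2 = (norm w)\<^sup>2 + 2 * c * (w \<bullet> D s) + c\<^sup>2 * (norm (D s))\<^sup>2"
  proof -
    fix s
    have "(norm (w + c *\<^sub>R D s))\<^sup>2 = (w + c *\<^sub>R D s) \<bullet> (w + c *\<^sub>R D s)" by (rule power2_norm_eq_inner)
    also have "\<dots> = w \<bullet> w + 2 * c * (w \<bullet> D s) + c\<^sup>2 * (D s \<bullet> D s)"
      by (simp add: inner_add_left inner_add_right inner_commute[of "D s" w] power2_eq_square algebra_simps)
    finally show "?thesis s" by (simp add: power2_norm_eq_inner)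
  qed
  have iI: "integrable P (\<lambda>s. w \<bullet> D s)" using int by simp
  have iS: "integrable P (\<lambda>s. (norm w)\<^sup>2 + 2 * c * (w \<bullet> D s) + c\<^sup>2 * (norm (D s))\<^sup>2)"
    by (intro Bochner_Integration.integrable_add integrable_mult_right integrable_const iI iN)
  have "(\<integral>s. (norm w)\<^sup>2 + 2 * c * (w \<bullet> D s) + c\<^sup>2 * (norm (D s))\<^sup>2 \<partial>P)
      = (norm w)\<^sup>2 + 2 * c * (\<integral>s. w \<bullet> D s \<partial>P) + c\<^sup>2 * (\<integral>s. (norm (D s))\<^sup>2 \<partial>P)"
    using iI iN by (simp add: prob_space)
  also have "(\<integral>s. w \<bullet> D s \<partial>P) = 0" using int z by simp
  finally have I: "(\<integral>s. (norm w)\<^sup>2 + 2 * c * (w \<bullet> D s) + c\<^sup>2 * (norm (D s))\<^sup>2 \<partial>P)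
      = (norm w)\<^sup>2 + c\<^sup>2 * (\<integral>s. (norm (D s))\<^sup>2 \<partial>P)" by simp
  have "(\<integral>\<^sup>+ s. ennreal ((norm (w + c *\<^sub>R D s))\<^sup>2) \<partial>P)
      = (\<integral>\<^sup>+ s. ennreal ((norm w)\<^sup>2 + 2 * c * (w \<bullet> D s) + c\<^sup>2 * (norm (D s))\<^sup>2) \<partial>P)"
    by (simp only: expand)
  also have "\<dots> = ennreal (\<integral>s. (norm w)\<^sup>2 + 2 * c * (w \<bullet> D s) + c\<^sup>2 * (norm (D s))\<^sup>2 \<partial>P)"
    by (rule nn_integral_eq_integral[OF iS]) (auto simp: expand[symmetric])
  also have "\<dots> \<le> ennreal ((norm w)\<^sup>2 + c\<^sup>2 * V)"
    unfolding I using IV by (intro ennreal_leI add_left_mono mult_left_mono) auto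
  finally show ?thesis .
qed



lemma real_id1: "0 < D \<Longrightarrow> 0 < s \<Longrightarrow> 0 < (r::real) \<Longrightarrow> \<gamma> = D / (s * r) \<Longrightarrow>
  (D\<^sup>2 + r\<^sup>2 * (\<gamma>\<^sup>2 * (s\<^sup>2 / 2))) / (2 * \<gamma>) = 3 / 4 * (D * s * r)"
proof -
  assume a: "0 < D" "0 < s" "0 < r" "\<gamma> = D / (s * r)"
  have "r\<^sup>2 * (\<gamma>\<^sup>2 * (s\<^sup>2 / 2)) = D\<^sup>2 / 2"
    using a by (simp add: power_divide power_mult_distrib)
  then have "(D\<^sup>2 + r\<^sup>2 * (\<gamma>\<^sup>2 * (s\<^sup>2 / 2))) / (2 * \<gamma>) = (3 / 2 * D\<^sup>2) / (2 * (D / (s * r)))"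
    using a by simp
  also have "\<dots> = 3 / 4 * (D * s * r)"
    using a by (simp add: field_simps power2_eq_square)
  finally show ?thesis .
qed

lemma real_id2: "0 < M1 \<Longrightarrow> 0 < r \<Longrightarrow>
  r\<^sup>2 * M1\<^sup>2 / (2 * (r * M1) * r\<^sup>2) + r * M1 / (2 * r\<^sup>2) + D * s * r / r\<^sup>2 = (M1 + D * (s::real)) / r"
  by (simp add: field_simps power2_eq_square)

lemma sum_shift1: fixes n :: nat and h :: "nat \<Rightarrow> 'c::comm_monoid_add"
  shows "(\<Sum>\<tau>=1..n. h (\<tau> - 1)) = (\<Sum>j<n. h j)"
  by (induction n) (auto simp: sum.cl_ivl_Suc)

lemma amgm_abs: "0 < (c::real) \<Longrightarrow> \<bar>t\<bar> \<le> t\<^sup>2 / (2 * c) + c / 2"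
proof -
  assume c: "0 < c"
  have "0 \<le> (\<bar>t\<bar> - c)\<^sup>2" by simp
  then have "2 * c * \<bar>t\<bar> \<le> t\<^sup>2 + c\<^sup>2" by (simp add: power2_eq_square algebra_simps)
  then show ?thesis using c by (simp add: field_simps power2_eq_square)
qed

theorem lemma2:
  fixes M :: "'m measure" and P :: "'b measure"
    and \<xi> :: "nat \<Rightarrow> 'm \<Rightarrow> 'b"
    and X :: "'a::euclidean_space set"
    and g :: "'a \<Rightarrow> 'b \<Rightarrow> real" and G :: "'a \<Rightarrow> 'b \<Rightarrow> 'a"
    and f :: "'a \<Rightarrow> real"
    and L M1 M2 :: real and x1 xstar :: 'a and N :: nat
  assumes probM: "prob_space M"
    and probP: "prob_space P"
    and xi_rv: "\<And>t. \<xi> t \<in> measurable M P"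
    and xi_distr: "\<And>t. distr M P (\<xi> t) = P"
    and xi_indep: "prob_space.indep_vars M (\<lambda>_. P) \<xi> UNIV"
    and X_ne: "X \<noteq> {}" and X_closed: "closed X" and X_bounded: "bounded X" and X_convex: "convex X"
    and g_meas: "(\<lambda>(x, s). g x s) \<in> borel_measurable (borel \<Otimes>\<^sub>M P)"
    and g_convex: "\<And>s. s \<in> space P \<Longrightarrow> convex_on UNIV (\<lambda>x. g x s)"
    and g_int: "\<And>x. integrable P (g x)"
    and G_meas: "(\<lambda>(x, s). G x s) \<in> borel_measurable (borel \<Otimes>\<^sub>M P)"
    and G_subgrad: "\<And>x s. x \<in> X \<Longrightarrow> s \<in> space P \<Longrightarrow> is_subgradient (\<lambda>y. g y s) x (G x s)"
    and f_def: "\<And>x. f x = (\<integral>s. g x s \<partial>P)"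
    and f_convex: "convex_on X f"
    and f_lip: "\<exists>C. C-lipschitz_on X f"
    and xstar_in: "xstar \<in> X" and xstar_min: "\<And>x. x \<in> X \<Longrightarrow> f xstar \<le> f x"
    and A1: "\<And>x v. x \<in> X \<Longrightarrow> is_subgradient f x v \<Longrightarrow> norm v \<le> L"
    and A2_int: "\<And>x. x \<in> X \<Longrightarrow> integrable P (G x)"
    and A2_sub: "\<And>x. x \<in> X \<Longrightarrow> is_subgradient f x (\<integral>s. G x s \<partial>P)"
    and M1_pos: "0 < M1" and M2_pos: "0 < M2"
    and A3_1: "\<And>x. x \<in> X \<Longrightarrow> (\<integral>\<^sup>+ s. ennreal ((g x s - f x)\<^sup>2) \<partial>P) \<le> ennreal (M1\<^sup>2)"
    and A3_2: "\<And>x. x \<in> X \<Longrightarrow>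
       (\<integral>\<^sup>+ s. ennreal ((norm (G x s - (\<integral>s'. G x s' \<partial>P)))\<^sup>2) \<partial>P) \<le> ennreal (M2\<^sup>2)"
    and x1_in: "x1 \<in> X"
    and N_pos: "1 \<le> N"
  shows "let D = (SUP x\<in>X. norm (x - x1));
             \<gamma> = D / (sqrt (2 * (M2\<^sup>2 + L\<^sup>2)) * sqrt (real N));
             gN = (\<lambda>\<omega>. (1 / real N) *
                    (\<Sum>\<tau>=1..N. g (rsa X G \<gamma> x1 (\<lambda>t. \<xi> t \<omega>) (\<tau> - 1)) (\<xi> \<tau> \<omega>)))
         in (\<integral>\<^sup>+ \<omega>. ennreal \<bar>gN \<omega> - f xstar\<bar> \<partial>M)
              \<le> ennreal ((M1 + D * sqrt (2 * (M2\<^sup>2 + L\<^sup>2))) / sqrt (real N))"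
  proof -
  interpret M: prob_space M by (rule probM)
  interpret P: prob_space P by (rule probP)
  define D where "D = (SUP x\<in>X. norm (x - x1))"
  define s where "s = sqrt (2 * (M2\<^sup>2 + L\<^sup>2))"
  define \<gamma> where "\<gamma> = D / (s * sqrt (real N))"
  define xx where "xx = (\<lambda>z k. rsa X G \<gamma> x1 z k)"
  let ?Qm = "\<lambda>n. PiM {..<n} (\<lambda>_. P)"
  let ?Y = "\<lambda>n \<omega>. restrict (\<lambda>i. \<xi> i \<omega>) {..<n}"
  let ?Q = "\<lambda>n. distr M (?Qm n) (?Y n)"
  have bddX: "bdd_above ((\<lambda>x. norm (x - x1)) ` X)"
  proof -
    obtain B where B: "\<And>x. x \<in> X \<Longrightarrow> norm x \<le> B" using X_bounded unfolding bounded_iff by blast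
    have "norm (x - x1) \<le> B + norm x1" if "x \<in> X" for x
      using norm_triangle_ineq4[of x x1] B[OF that] by linarith
    then show ?thesis by (rule bdd_aboveI2)
  qed
  have Dle: "\<And>x. x \<in> X \<Longrightarrow> norm (x - x1) \<le> D"
    unfolding D_def using bddX by (rule cSUP_upper2) auto
  have D0: "0 \<le> D" using Dle[OF x1_in] by simp
  have L0: "0 \<le> L" using A1[OF x1_in A2_sub[OF x1_in]] norm_ge_zero order.trans by blast
  have s_pos: "0 < s" unfolding s_def using M2_pos by (simp add: add_pos_nonneg)
  have s2: "s\<^sup>2 = 2 * (M2\<^sup>2 + L\<^sup>2)" unfolding s_def by (simp add: add_nonneg_nonneg)
  have N0: "0 < real N" using N_pos by simp
  have g0: "0 \<le> \<gamma>" unfolding \<gamma>_def using D0 s_pos N0 by simp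
  have xin: "\<And>z k. xx z k \<in> X" unfolding xx_def using X_closed X_ne x1_in by (rule rsa_in)
  have f_meas: "f \<in> borel_measurable borel"
  proof -
    have "(\<lambda>x. \<integral>s. g x s \<partial>P) \<in> borel_measurable borel"
      by (rule P.borel_measurable_lebesgue_integral) (use g_meas in simp)
    moreover have "f = (\<lambda>x. \<integral>s. g x s \<partial>P)" using f_def by auto
    ultimately show ?thesis by simp
  qed
  have mx: "\<And>k n. k < n \<Longrightarrow> (\<lambda>y. xx y k) \<in> borel_measurable (?Qm n)"
    unfolding xx_def by (rule rsa_meas[OF G_meas X_convex X_closed X_ne])
  have mY: "\<And>n. ?Y n \<in> measurable M (?Qm n)"
    by (intro measurable_restrict) (simp add: xi_rv)
  have Qprob: "\<And>n. prob_space (?Q n)" by (rule M.prob_space_distr[OF mY])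
  have distY: "\<And>n u. u \<in> borel_measurable (?Qm n) \<Longrightarrow> (\<integral>\<^sup>+\<omega>. u (?Y n \<omega>) \<partial>M) = (\<integral>\<^sup>+y. u y \<partial>?Q n)"
    by (subst nn_integral_distr[OF mY]) auto
  have xloc: "\<And>k n \<omega>. k < n \<Longrightarrow> xx (?Y n \<omega>) k = xx (\<lambda>t. \<xi> t \<omega>) k"
    unfolding xx_def by (rule rsa_local) auto
  have ton: "\<And>n h. h \<in> borel_measurable (?Qm n \<Otimes>\<^sub>M P) \<Longrightarrow>
      (\<integral>\<^sup>+\<omega>. h (?Y n \<omega>, \<xi> n \<omega>) \<partial>M) = (\<integral>\<^sup>+y. (\<integral>\<^sup>+s. h (y, s) \<partial>P) \<partial>?Q n)"
    by (rule tonelli_indep[OF probM probP xi_rv xi_distr xi_indep])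
  have mxP: "\<And>k n. k < n \<Longrightarrow> (\<lambda>w. (xx (fst w) k, snd w)) \<in> measurable (?Qm n \<Otimes>\<^sub>M P) (borel \<Otimes>\<^sub>M P)"
    by (intro measurable_Pair measurable_compose[OF measurable_fst mx]) auto
  have mGP: "\<And>k n. k < n \<Longrightarrow> (\<lambda>w. G (xx (fst w) k) (snd w)) \<in> borel_measurable (?Qm n \<Otimes>\<^sub>M P)"
    using measurable_compose[OF mxP G_meas] by simp
  have mgP: "\<And>k n. k < n \<Longrightarrow> (\<lambda>w. g (xx (fst w) k) (snd w)) \<in> borel_measurable (?Qm n \<Otimes>\<^sub>M P)"
    using measurable_compose[OF mxP g_meas] by simp
  have mfx: "\<And>k n. k < n \<Longrightarrow> (\<lambda>y. f (xx y k)) \<in> borel_measurable (?Qm n)"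
    using measurable_compose[OF mx f_meas] by simp
  have mcoord: "\<And>t n. t < n \<Longrightarrow> (\<lambda>y. y t) \<in> measurable (?Qm n) P"
    by (intro measurable_component_singleton) auto
  define Sd where "Sd = (\<lambda>z k. \<Sum>\<tau>\<in>{1..k}. (g (xx z (\<tau> - 1)) (z \<tau>) - f (xx z (\<tau> - 1))))"
  have mgc: "\<And>(t::nat) (j::nat) (n::nat). t < n \<Longrightarrow> j < n \<Longrightarrow> (\<lambda>y. g (xx y j) (y t)) \<in> borel_measurable (?Qm n)"
  proof -
    fix t j n :: nat assume "t < n" "j < n"
    then have "(\<lambda>y. (xx y j, y t)) \<in> measurable (?Qm n) (borel \<Otimes>\<^sub>M P)"
      by (intro measurable_Pair mx mcoord)
    from measurable_compose[OF this g_meas] show "(\<lambda>y. g (xx y j) (y t)) \<in> borel_measurable (?Qm n)"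
      by simp
  qed
  have mSd: "\<And>k n. k < n \<Longrightarrow> (\<lambda>y. Sd y k) \<in> borel_measurable (?Qm n)"
    unfolding Sd_def
    by (intro borel_measurable_sum borel_measurable_diff mgc mfx) auto
  have Sd_Suc: "\<And>z k. Sd z (Suc k) = Sd z k + (g (xx z k) (z (Suc k)) - f (xx z k))"
    unfolding Sd_def by (simp add: sum.cl_ivl_Suc)
  have Sd_loc: "\<And>k n \<omega>. k < n \<Longrightarrow> Sd (?Y n \<omega>) k = Sd (\<lambda>t. \<xi> t \<omega>) k"
    unfolding Sd_def by (intro sum.cong refl) (auto simp: xloc)
  have stepA: "\<And>x a. x \<in> X \<Longrightarrow> (\<integral>\<^sup>+s. ennreal ((a + (g x s - f x))\<^sup>2) \<partial>P) \<le> ennreal (a\<^sup>2 + M1\<^sup>2)"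
  proof -
    fix x a assume x: "x \<in> X"
    have i: "integrable P (\<lambda>s. g x s - f x)" using g_int by simp
    have z: "(\<integral>s. g x s - f x \<partial>P) = 0" using g_int by (simp add: f_def P.prob_space)
    have v: "(\<integral>\<^sup>+ s. ennreal ((norm (g x s - f x))\<^sup>2) \<partial>P) \<le> ennreal (M1\<^sup>2)"
      using A3_1[OF x] by simp
    from var_bound[OF zero_le_power2 probP i z v, of a 1] show "?thesis x a" by simp
  qed
  have claimA: "\<And>k. (\<integral>\<^sup>+\<omega>. ennreal ((Sd (\<lambda>t. \<xi> t \<omega>) k)\<^sup>2) \<partial>M) \<le> ennreal (real k * M1\<^sup>2)"
  proof -
    fix k show "?thesis k"
    proof (induction k)
      case 0
      then show ?case by (simp add: Sd_def)
    next
      case (Suc k)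
      let ?h = "\<lambda>w. ennreal ((Sd (fst w) k + (g (xx (fst w) k) (snd w) - f (xx (fst w) k)))\<^sup>2)"
      have mh: "?h \<in> borel_measurable (?Qm (Suc k) \<Otimes>\<^sub>M P)"
        using measurable_compose[OF measurable_fst mSd[of k "Suc k"]] mgP[of k "Suc k"]
          measurable_compose[OF measurable_fst mfx[of k "Suc k"]]
        by measurable
      have "(\<integral>\<^sup>+\<omega>. ennreal ((Sd (\<lambda>t. \<xi> t \<omega>) (Suc k))\<^sup>2) \<partial>M) = (\<integral>\<^sup>+\<omega>. ?h (?Y (Suc k) \<omega>, \<xi> (Suc k) \<omega>) \<partial>M)"
        by (simp add: Sd_Suc Sd_loc xloc)
      also have "\<dots> = (\<integral>\<^sup>+y. (\<integral>\<^sup>+s. ?h (y, s) \<partial>P) \<partial>?Q (Suc k))"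
        by (rule ton[OF mh])
      also have "\<dots> \<le> (\<integral>\<^sup>+y. ennreal ((Sd y k)\<^sup>2 + M1\<^sup>2) \<partial>?Q (Suc k))"
        by (intro nn_integral_mono) (simp only: fst_conv snd_conv stepA[OF xin])
      also have "\<dots> = (\<integral>\<^sup>+y. ennreal ((Sd y k)\<^sup>2) \<partial>?Q (Suc k)) + ennreal (M1\<^sup>2)"
      proof -
        interpret Q: prob_space "?Q (Suc k)" by (rule Qprob)
        have "(\<integral>\<^sup>+y. ennreal ((Sd y k)\<^sup>2 + M1\<^sup>2) \<partial>?Q (Suc k))
           = (\<integral>\<^sup>+y. (ennreal ((Sd y k)\<^sup>2) + ennreal (M1\<^sup>2)) \<partial>?Q (Suc k))"
          by (rule nn_integral_cong) (simp add: ennreal_plus)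
        also have "\<dots> = (\<integral>\<^sup>+y. ennreal ((Sd y k)\<^sup>2) \<partial>?Q (Suc k)) + (\<integral>\<^sup>+y. ennreal (M1\<^sup>2) \<partial>?Q (Suc k))"
          by (rule nn_integral_add) (use mSd[of k "Suc k"] in measurable)
        also have "(\<integral>\<^sup>+y. ennreal (M1\<^sup>2) \<partial>?Q (Suc k)) = ennreal (M1\<^sup>2)"
          using Q.emeasure_space_1 by simp
        finally show ?thesis .
      qed
      also have "(\<integral>\<^sup>+y. ennreal ((Sd y k)\<^sup>2) \<partial>?Q (Suc k)) = (\<integral>\<^sup>+\<omega>. ennreal ((Sd (\<lambda>t. \<xi> t \<omega>) k)\<^sup>2) \<partial>M)"
      proof -
        have "(\<integral>\<^sup>+\<omega>. ennreal ((Sd (?Y (Suc k) \<omega>) k)\<^sup>2) \<partial>M) = (\<integral>\<^sup>+y. ennreal ((Sd y k)\<^sup>2) \<partial>?Q (Suc k))"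
          by (rule distY) (use mSd[of k "Suc k"] in measurable)
        then show ?thesis by (simp add: Sd_loc)
      qed
      also have "\<dots> + ennreal (M1\<^sup>2) \<le> ennreal (real k * M1\<^sup>2) + ennreal (M1\<^sup>2)"
        using Suc.IH by (rule add_right_mono)
      also have "\<dots> = ennreal (real (Suc k) * M1\<^sup>2)"
        by (subst ennreal_plus[symmetric]) (auto simp: algebra_simps)
      finally show ?case .
    qed
  qed
  have cpm[measurable]: "closest_point X \<in> borel_measurable borel"
    by (rule borel_measurable_continuous_onI[OF continuous_on_closest_point[OF X_convex X_closed X_ne]])
  have stepB: "\<And>x. x \<in> X \<Longrightarrow> (\<integral>\<^sup>+s. ennreal ((norm (closest_point X (x - \<gamma> *\<^sub>R G x s) - xstar))\<^sup>2) \<partial>P)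
      + ennreal (2 * \<gamma> * (f x - f xstar)) \<le> ennreal ((norm (x - xstar))\<^sup>2 + \<gamma>\<^sup>2 * (M2\<^sup>2 + L\<^sup>2))"
  proof -
    fix x assume x: "x \<in> X"
    define fp where "fp = (\<integral>s. G x s \<partial>P)"
    define w where "w = x - xstar - \<gamma> *\<^sub>R fp"
    have i: "integrable P (\<lambda>s. G x s - fp)" using A2_int[OF x] by simp
    have z: "(\<integral>s. G x s - fp \<partial>P) = 0" using A2_int[OF x] by (simp add: fp_def P.prob_space)
    have v: "(\<integral>\<^sup>+ s. ennreal ((norm (G x s - fp))\<^sup>2) \<partial>P) \<le> ennreal (M2\<^sup>2)"
      using A3_2[OF x] by (simp add: fp_def)
    have vb: "(\<integral>\<^sup>+ s. ennreal ((norm (w + (- \<gamma>) *\<^sub>R (G x s - fp)))\<^sup>2) \<partial>P) \<le> ennreal ((norm w)\<^sup>2 + (- \<gamma>)\<^sup>2 * M2\<^sup>2)"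
      by (rule var_bound[OF zero_le_power2 probP i z v])
    have pw: "norm (closest_point X (x - \<gamma> *\<^sub>R G x s) - xstar) \<le> norm (w + (- \<gamma>) *\<^sub>R (G x s - fp))" for s
    proof -
      have "dist (closest_point X (x - \<gamma> *\<^sub>R G x s)) (closest_point X xstar) \<le> dist (x - \<gamma> *\<^sub>R G x s) xstar"
        by (rule closest_point_lipschitz[OF X_convex X_closed X_ne])
      moreover have "w + (- \<gamma>) *\<^sub>R (G x s - fp) = x - \<gamma> *\<^sub>R G x s - xstar"
        by (simp add: w_def algebra_simps)
      ultimately show ?thesis by (simp add: closest_point_self[OF xstar_in] dist_norm)
    qed
    have I1: "(\<integral>\<^sup>+s. ennreal ((norm (closest_point X (x - \<gamma> *\<^sub>R G x s) - xstar))\<^sup>2) \<partial>P)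
        \<le> ennreal ((norm w)\<^sup>2 + \<gamma>\<^sup>2 * M2\<^sup>2)"
    proof -
      have "(\<integral>\<^sup>+s. ennreal ((norm (closest_point X (x - \<gamma> *\<^sub>R G x s) - xstar))\<^sup>2) \<partial>P)
          \<le> (\<integral>\<^sup>+ s. ennreal ((norm (w + (- \<gamma>) *\<^sub>R (G x s - fp)))\<^sup>2) \<partial>P)"
        by (intro nn_integral_mono ennreal_leI power_mono pw norm_ge_zero)
      with vb show ?thesis by simp
    qed
    have sub: "f xstar \<ge> f x + fp \<bullet> (xstar - x)"
      using A2_sub[OF x] unfolding is_subgradient_def fp_def by blast
    have fpL: "norm fp \<le> L" using A1[OF x] A2_sub[OF x] unfolding fp_def by blast
    have wexp: "(norm w)\<^sup>2 = (norm (x - xstar))\<^sup>2 - 2 * \<gamma> * (fp \<bullet> (x - xstar)) + \<gamma>\<^sup>2 * (norm fp)\<^sup>2"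
    proof -
      have "(norm w)\<^sup>2 = w \<bullet> w" by (rule power2_norm_eq_inner)
      also have "\<dots> = (x - xstar) \<bullet> (x - xstar) - 2 * \<gamma> * (fp \<bullet> (x - xstar)) + \<gamma>\<^sup>2 * (fp \<bullet> fp)"
        unfolding w_def
        by (simp add: inner_diff_left inner_diff_right inner_commute[of fp "x - xstar"] power2_eq_square algebra_simps)
           (simp add: inner_commute)
      finally show ?thesis by (simp add: power2_norm_eq_inner)
    qed
    have ip: "f x - f xstar \<le> fp \<bullet> (x - xstar)"
      using sub by (simp add: inner_diff_right)
    have fpL2: "(norm fp)\<^sup>2 \<le> L\<^sup>2" using fpL by (simp add: power_mono)
    have R: "(norm w)\<^sup>2 + \<gamma>\<^sup>2 * M2\<^sup>2 + 2 * \<gamma> * (f x - f xstar) \<le> (norm (x - xstar))\<^sup>2 + \<gamma>\<^sup>2 * (M2\<^sup>2 + L\<^sup>2)"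
    proof -
      have "2 * \<gamma> * (f x - f xstar) \<le> 2 * \<gamma> * (fp \<bullet> (x - xstar))"
        using ip g0 by (intro mult_left_mono) auto
      moreover have "\<gamma>\<^sup>2 * (norm fp)\<^sup>2 \<le> \<gamma>\<^sup>2 * L\<^sup>2" using fpL2 by (intro mult_left_mono) auto
      ultimately show ?thesis unfolding wexp by (simp add: algebra_simps)
    qed
    have fx0: "0 \<le> f x - f xstar" using xstar_min[OF x] by simp
    have "(\<integral>\<^sup>+s. ennreal ((norm (closest_point X (x - \<gamma> *\<^sub>R G x s) - xstar))\<^sup>2) \<partial>P)
      + ennreal (2 * \<gamma> * (f x - f xstar)) \<le> ennreal ((norm w)\<^sup>2 + \<gamma>\<^sup>2 * M2\<^sup>2) + ennreal (2 * \<gamma> * (f x - f xstar))"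
      using I1 by (rule add_right_mono)
    also have "\<dots> = ennreal ((norm w)\<^sup>2 + \<gamma>\<^sup>2 * M2\<^sup>2 + 2 * \<gamma> * (f x - f xstar))"
      using g0 fx0 by (subst ennreal_plus[symmetric]) auto
    also have "\<dots> \<le> ennreal ((norm (x - xstar))\<^sup>2 + \<gamma>\<^sup>2 * (M2\<^sup>2 + L\<^sup>2))"
      using R by (rule ennreal_leI)
    finally show "?thesis x" .
  qed
  define V2 where "V2 = \<gamma>\<^sup>2 * (M2\<^sup>2 + L\<^sup>2)"
  have V20: "0 \<le> V2" unfolding V2_def by simp
  have xx_Suc: "\<And>z k. xx z (Suc k) = closest_point X (xx z k - \<gamma> *\<^sub>R G (xx z k) (z (Suc k)))"
    by (simp add: xx_def)
  have claimB: "\<And>k. (\<integral>\<^sup>+\<omega>. ennreal ((norm (xx (\<lambda>t. \<xi> t \<omega>) k - xstar))\<^sup>2) \<partial>M)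
      + ennreal (2 * \<gamma>) * (\<Sum>j<k. \<integral>\<^sup>+\<omega>. ennreal (f (xx (\<lambda>t. \<xi> t \<omega>) j) - f xstar) \<partial>M)
      \<le> ennreal ((norm (x1 - xstar))\<^sup>2 + real k * V2)"
  proof -
    fix k show "?thesis k"
    proof (induction k)
      case 0
      have "xx z 0 = x1" for z by (simp add: xx_def)
      then show ?case using M.emeasure_space_1 by simp
    next
      case (Suc k)
      interpret Q: prob_space "?Q (Suc k)" by (rule Qprob)
      let ?hA = "\<lambda>w. ennreal ((norm (closest_point X (xx (fst w) k - \<gamma> *\<^sub>R G (xx (fst w) k) (snd w)) - xstar))\<^sup>2)"
      have mhA: "?hA \<in> borel_measurable (?Qm (Suc k) \<Otimes>\<^sub>M P)"
        using measurable_compose[OF measurable_fst mx[of k "Suc k"]] mGP[of k "Suc k"]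
        by measurable
      have mI: "(\<lambda>y. \<integral>\<^sup>+s. ?hA (y, s) \<partial>P) \<in> borel_measurable (?Q (Suc k))"
        using P.borel_measurable_nn_integral_fst[OF mhA] by simp
      have me: "(\<lambda>y. ennreal (2 * \<gamma> * (f (xx y k) - f xstar))) \<in> borel_measurable (?Q (Suc k))"
        using mfx[of k "Suc k"] by simp
      have mA: "(\<lambda>y. ennreal ((norm (xx y k - xstar))\<^sup>2)) \<in> borel_measurable (?Qm (Suc k))"
        using mx[of k "Suc k"] by measurable
      define a1 where "a1 = (\<integral>\<^sup>+\<omega>. ennreal ((norm (xx (\<lambda>t. \<xi> t \<omega>) (Suc k) - xstar))\<^sup>2) \<partial>M)"
      define a0 where "a0 = (\<integral>\<^sup>+\<omega>. ennreal ((norm (xx (\<lambda>t. \<xi> t \<omega>) k - xstar))\<^sup>2) \<partial>M)"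
      define e where "e = (\<integral>\<^sup>+\<omega>. ennreal (f (xx (\<lambda>t. \<xi> t \<omega>) k) - f xstar) \<partial>M)"
      define S where "S = (\<Sum>j<k. \<integral>\<^sup>+\<omega>. ennreal (f (xx (\<lambda>t. \<xi> t \<omega>) j) - f xstar) \<partial>M)"
      have a1_eq: "a1 = (\<integral>\<^sup>+y. (\<integral>\<^sup>+s. ?hA (y, s) \<partial>P) \<partial>?Q (Suc k))"
      proof -
        have "a1 = (\<integral>\<^sup>+\<omega>. ?hA (?Y (Suc k) \<omega>, \<xi> (Suc k) \<omega>) \<partial>M)"
          unfolding a1_def by (simp add: xx_Suc xloc)
        also have "\<dots> = (\<integral>\<^sup>+y. (\<integral>\<^sup>+s. ?hA (y, s) \<partial>P) \<partial>?Q (Suc k))"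
          by (rule ton[OF mhA])
        finally show ?thesis .
      qed
      have ce_eq: "ennreal (2 * \<gamma>) * e = (\<integral>\<^sup>+y. ennreal (2 * \<gamma> * (f (xx y k) - f xstar)) \<partial>?Q (Suc k))"
      proof -
        have mE: "(\<lambda>y. ennreal (f (xx y k) - f xstar)) \<in> borel_measurable (?Qm (Suc k))"
          using mfx[of k "Suc k"] by measurable
        have "e = (\<integral>\<^sup>+\<omega>. ennreal (f (xx (?Y (Suc k) \<omega>) k) - f xstar) \<partial>M)"
          unfolding e_def by (simp add: xloc)
        also have "\<dots> = (\<integral>\<^sup>+y. ennreal (f (xx y k) - f xstar) \<partial>?Q (Suc k))"
          by (rule distY[OF mE])
        finally have "ennreal (2 * \<gamma>) * e = ennreal (2 * \<gamma>) * (\<integral>\<^sup>+y. ennreal (f (xx y k) - f xstar) \<partial>?Q (Suc k))"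
          by simp
        also have "\<dots> = (\<integral>\<^sup>+y. ennreal (2 * \<gamma>) * ennreal (f (xx y k) - f xstar) \<partial>?Q (Suc k))"
          by (rule nn_integral_cmult[symmetric]) (use mE in simp)
        also have "\<dots> = (\<integral>\<^sup>+y. ennreal (2 * \<gamma> * (f (xx y k) - f xstar)) \<partial>?Q (Suc k))"
        proof (rule nn_integral_cong)
          fix y
          have "0 \<le> f (xx y k) - f xstar" using xstar_min[OF xin] by simp
          then show "ennreal (2 * \<gamma>) * ennreal (f (xx y k) - f xstar) = ennreal (2 * \<gamma> * (f (xx y k) - f xstar))"
            using g0 by (simp add: ennreal_mult)
        qed
        finally show ?thesis .
      qed
      have a0_eq: "a0 = (\<integral>\<^sup>+y. ennreal ((norm (xx y k - xstar))\<^sup>2) \<partial>?Q (Suc k))"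
      proof -
        have "(\<integral>\<^sup>+\<omega>. ennreal ((norm (xx (?Y (Suc k) \<omega>) k - xstar))\<^sup>2) \<partial>M) = (\<integral>\<^sup>+y. ennreal ((norm (xx y k - xstar))\<^sup>2) \<partial>?Q (Suc k))"
          by (rule distY[OF mA])
        then show ?thesis unfolding a0_def by (simp add: xloc)
      qed
      have step: "a1 + ennreal (2 * \<gamma>) * e \<le> a0 + ennreal V2"
      proof -
        have "a1 + ennreal (2 * \<gamma>) * e = (\<integral>\<^sup>+y. ((\<integral>\<^sup>+s. ?hA (y, s) \<partial>P) + ennreal (2 * \<gamma> * (f (xx y k) - f xstar))) \<partial>?Q (Suc k))"
          unfolding a1_eq ce_eq by (rule nn_integral_add[symmetric, OF mI me])
        also have "\<dots> \<le> (\<integral>\<^sup>+y. ennreal ((norm (xx y k - xstar))\<^sup>2 + V2) \<partial>?Q (Suc k))"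
          by (intro nn_integral_mono) (simp only: fst_conv snd_conv stepB[OF xin] V2_def)
        also have "\<dots> = (\<integral>\<^sup>+y. (ennreal ((norm (xx y k - xstar))\<^sup>2) + ennreal V2) \<partial>?Q (Suc k))"
          using V20 by (intro nn_integral_cong) (simp add: ennreal_plus)
        also have "\<dots> = (\<integral>\<^sup>+y. ennreal ((norm (xx y k - xstar))\<^sup>2) \<partial>?Q (Suc k)) + (\<integral>\<^sup>+y. ennreal V2 \<partial>?Q (Suc k))"
          by (rule nn_integral_add) (use mA in simp_all)
        also have "(\<integral>\<^sup>+y. ennreal V2 \<partial>?Q (Suc k)) = ennreal V2"
          using Q.emeasure_space_1 by simp
        finally show ?thesis unfolding a0_eq .
      qed
      have IH: "a0 + ennreal (2 * \<gamma>) * S \<le> ennreal ((norm (x1 - xstar))\<^sup>2 + real k * V2)"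
        using Suc.IH unfolding a0_def S_def .
      have "a1 + ennreal (2 * \<gamma>) * (S + e) = (a1 + ennreal (2 * \<gamma>) * e) + ennreal (2 * \<gamma>) * S"
        by (simp only: distrib_left add.assoc add.commute add.left_commute)
      also have "\<dots> \<le> (a0 + ennreal V2) + ennreal (2 * \<gamma>) * S"
        using step by (rule add_right_mono)
      also have "\<dots> = (a0 + ennreal (2 * \<gamma>) * S) + ennreal V2" by (simp add: ac_simps)
      also have "\<dots> \<le> ennreal ((norm (x1 - xstar))\<^sup>2 + real k * V2) + ennreal V2"
        using IH by (rule add_right_mono)
      also have "\<dots> = ennreal ((norm (x1 - xstar))\<^sup>2 + real (Suc k) * V2)"
        using V20 by (subst ennreal_plus[symmetric]) (auto simp: algebra_simps)
      finally show ?case unfolding a1_def S_def e_def by (simp add: sum.lessThan_Suc)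
    qed
  qed
  define r where "r = sqrt (real N)"
  have r0: "0 < r" unfolding r_def using N0 by simp
  have rN: "r\<^sup>2 = real N" unfolding r_def by simp
  define e where "e = (\<lambda>j \<omega>. f (xx (\<lambda>t. \<xi> t \<omega>) j) - f xstar)"
  have e0: "\<And>j \<omega>. 0 \<le> e j \<omega>" unfolding e_def using xstar_min[OF xin] by simp
  have claimC: "(\<Sum>j<N. \<integral>\<^sup>+\<omega>. ennreal (e j \<omega>) \<partial>M) \<le> ennreal (D * s * r)"
  proof (cases "D = 0")
    case True
    have eqx: "x = x1" if "x \<in> X" for x
    proof -
      have "norm (x - x1) \<le> 0" using Dle[OF that] True by simp
      then show ?thesis by simp
    qed
    have "\<And>j \<omega>. e j \<omega> = 0" unfolding e_def using eqx[OF xin] eqx[OF xstar_in] by simp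
    then show ?thesis by simp
  next
    case False
    then have Dp: "0 < D" using D0 by simp
    have gp: "0 < \<gamma>" unfolding \<gamma>_def using Dp s_pos N0 by simp
    define S where "S = (\<Sum>j<N. \<integral>\<^sup>+\<omega>. ennreal (e j \<omega>) \<partial>M)"
    have "ennreal (2 * \<gamma>) * S \<le> ennreal ((norm (x1 - xstar))\<^sup>2 + real N * V2)"
      using claimB[of N] unfolding S_def e_def
      by (rule order.trans[rotated]) (rule add_increasing[OF zero_le order_refl])
    also have "\<dots> \<le> ennreal (D\<^sup>2 + real N * V2)"
    proof (rule ennreal_leI)
      have "norm (x1 - xstar) \<le> D" using Dle[OF xstar_in] by (simp add: norm_minus_commute)
      then have "(norm (x1 - xstar))\<^sup>2 \<le> D\<^sup>2" by (simp add: power_mono)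
      then show "(norm (x1 - xstar))\<^sup>2 + real N * V2 \<le> D\<^sup>2 + real N * V2" by simp
    qed
    finally have 1: "ennreal (2 * \<gamma>) * S \<le> ennreal (D\<^sup>2 + real N * V2)" .
    have "S = ennreal (1 / (2 * \<gamma>)) * (ennreal (2 * \<gamma>) * S)"
      using gp by (simp add: mult.assoc[symmetric] ennreal_mult[symmetric])
    also have "\<dots> \<le> ennreal (1 / (2 * \<gamma>)) * ennreal (D\<^sup>2 + real N * V2)"
      using 1 by (rule mult_left_mono) simp
    also have "\<dots> = ennreal (1 / (2 * \<gamma>) * (D\<^sup>2 + real N * V2))"
      using gp V20 by (intro ennreal_mult[symmetric]) auto
    also have "\<dots> = ennreal ((D\<^sup>2 + real N * V2) / (2 * \<gamma>))"
      by simp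
    also have "\<dots> \<le> ennreal (D * s * r)"
    proof (rule ennreal_leI)
      have V2e: "V2 = \<gamma>\<^sup>2 * (s\<^sup>2 / 2)" unfolding V2_def s2 by simp
      have ge: "\<gamma> = D / (s * r)" unfolding \<gamma>_def r_def ..
      have "(D\<^sup>2 + real N * V2) / (2 * \<gamma>) = 3 / 4 * (D * s * r)"
        unfolding V2e rN[symmetric] by (rule real_id1[OF Dp s_pos r0 ge])
      also have "\<dots> \<le> D * s * r" using Dp s_pos r0 by simp
      finally show "(D\<^sup>2 + real N * V2) / (2 * \<gamma>) \<le> D * s * r" .
    qed
    finally show ?thesis unfolding S_def .
  qed
  define c where "c = r * M1"
  have c0: "0 < c" unfolding c_def using r0 M1_pos by simp
  have mSdw: "(\<lambda>\<omega>. Sd (\<lambda>t. \<xi> t \<omega>) N) \<in> borel_measurable M"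
  proof -
    have "(\<lambda>\<omega>. Sd (?Y (Suc N) \<omega>) N) \<in> borel_measurable M"
      by (rule measurable_compose[OF mY mSd]) simp
    then show ?thesis by (simp add: Sd_loc)
  qed
  have mew: "(\<lambda>\<omega>. e j \<omega>) \<in> borel_measurable M" for j
  proof -
    have "(\<lambda>\<omega>. f (xx (?Y (Suc j) \<omega>) j) - f xstar) \<in> borel_measurable M"
      using measurable_compose[OF mY mfx[of j "Suc j"]] by simp
    then show ?thesis unfolding e_def by (simp add: xloc)
  qed
  define gg where "gg = (\<lambda>\<omega>. (1 / real N) * (\<Sum>\<tau>=1..N. g (xx (\<lambda>t. \<xi> t \<omega>) (\<tau> - 1)) (\<xi> \<tau> \<omega>)))"
  have decomp: "gg \<omega> - f xstar = Sd (\<lambda>t. \<xi> t \<omega>) N / real N + (1 / real N) * (\<Sum>j<N. e j \<omega>)" for \<omega>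
  proof -
    let ?G = "\<Sum>\<tau>=1..N. g (xx (\<lambda>t. \<xi> t \<omega>) (\<tau> - 1)) (\<xi> \<tau> \<omega>)"
    let ?F = "\<Sum>j<N. f (xx (\<lambda>t. \<xi> t \<omega>) j)"
    have "Sd (\<lambda>t. \<xi> t \<omega>) N = ?G - (\<Sum>\<tau>=1..N. f (xx (\<lambda>t. \<xi> t \<omega>) (\<tau> - 1)))"
      unfolding Sd_def by (simp add: sum_subtractf)
    also have "(\<Sum>\<tau>=1..N. f (xx (\<lambda>t. \<xi> t \<omega>) (\<tau> - 1))) = ?F"
      by (rule sum_shift1)
    finally have 1: "Sd (\<lambda>t. \<xi> t \<omega>) N = ?G - ?F" .
    have 2: "(\<Sum>j<N. e j \<omega>) = ?F - real N * f xstar"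
      unfolding e_def by (simp add: sum_subtractf)
    show ?thesis unfolding gg_def 1 2 using N0 by (simp add: field_simps)
  qed
  have pw: "ennreal \<bar>gg \<omega> - f xstar\<bar> \<le> ennreal ((Sd (\<lambda>t. \<xi> t \<omega>) N)\<^sup>2 / (2 * c * real N)) + ennreal (c / (2 * real N))
      + ennreal ((1 / real N) * (\<Sum>j<N. e j \<omega>))" for \<omega>
  proof -
    let ?a = "Sd (\<lambda>t. \<xi> t \<omega>) N"
    let ?b = "(1 / real N) * (\<Sum>j<N. e j \<omega>)"
    have b0: "0 \<le> ?b" using e0 N0 by (simp add: sum_nonneg)
    have "\<bar>gg \<omega> - f xstar\<bar> \<le> \<bar>?a\<bar> / real N + ?b"
      unfolding decomp using b0 N0 by (simp add: abs_triangle_ineq order.trans[OF abs_triangle_ineq] abs_divide)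
    also have "\<bar>?a\<bar> / real N \<le> (?a\<^sup>2 / (2 * c) + c / 2) / real N"
      using amgm_abs[OF c0, of ?a] N0 by (simp add: divide_right_mono)
    also have "(?a\<^sup>2 / (2 * c) + c / 2) / real N = ?a\<^sup>2 / (2 * c * real N) + c / (2 * real N)"
      using N0 c0 by (simp add: field_simps)
    finally have "\<bar>gg \<omega> - f xstar\<bar> \<le> ?a\<^sup>2 / (2 * c * real N) + c / (2 * real N) + ?b" by simp
    then have "ennreal \<bar>gg \<omega> - f xstar\<bar> \<le> ennreal (?a\<^sup>2 / (2 * c * real N) + c / (2 * real N) + ?b)"
      by (rule ennreal_leI)
    also have "\<dots> = ennreal (?a\<^sup>2 / (2 * c * real N)) + ennreal (c / (2 * real N)) + ennreal ?b"
      using b0 c0 N0 by (simp add: ennreal_plus)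
    finally show ?thesis .
  qed
  have final: "(\<integral>\<^sup>+\<omega>. ennreal \<bar>gg \<omega> - f xstar\<bar> \<partial>M) \<le> ennreal ((M1 + D * s) / r)"
  proof -
    have "(\<integral>\<^sup>+\<omega>. ennreal \<bar>gg \<omega> - f xstar\<bar> \<partial>M) \<le> (\<integral>\<^sup>+\<omega>. (ennreal ((Sd (\<lambda>t. \<xi> t \<omega>) N)\<^sup>2 / (2 * c * real N)) + ennreal (c / (2 * real N))
      + ennreal ((1 / real N) * (\<Sum>j<N. e j \<omega>))) \<partial>M)"
      by (intro nn_integral_mono pw)
    also have "\<dots> = (\<integral>\<^sup>+\<omega>. ennreal ((Sd (\<lambda>t. \<xi> t \<omega>) N)\<^sup>2 / (2 * c * real N)) \<partial>M) + (\<integral>\<^sup>+\<omega>. ennreal (c / (2 * real N)) \<partial>M)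
      + (\<integral>\<^sup>+\<omega>. ennreal ((1 / real N) * (\<Sum>j<N. e j \<omega>)) \<partial>M)"
      using mSdw mew by (simp add: nn_integral_add)
    also have "(\<integral>\<^sup>+\<omega>. ennreal ((Sd (\<lambda>t. \<xi> t \<omega>) N)\<^sup>2 / (2 * c * real N)) \<partial>M)
        = ennreal (1 / (2 * c * real N)) * (\<integral>\<^sup>+\<omega>. ennreal ((Sd (\<lambda>t. \<xi> t \<omega>) N)\<^sup>2) \<partial>M)"
      using mSdw c0 N0 by (subst nn_integral_cmult[symmetric]) (auto simp: ennreal_mult[symmetric])
    also have "\<dots> \<le> ennreal (1 / (2 * c * real N)) * ennreal (real N * M1\<^sup>2)"
      by (intro mult_left_mono claimA) simp
    also have "\<dots> = ennreal (real N * M1\<^sup>2 / (2 * c * real N))"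
      using c0 N0 by (simp add: ennreal_mult[symmetric])
    also have "(\<integral>\<^sup>+\<omega>. ennreal (c / (2 * real N)) \<partial>M) = ennreal (c / (2 * real N))"
      using M.emeasure_space_1 by simp
    also have "(\<integral>\<^sup>+\<omega>. ennreal ((1 / real N) * (\<Sum>j<N. e j \<omega>)) \<partial>M)
        = ennreal (1 / real N) * (\<Sum>j<N. \<integral>\<^sup>+\<omega>. ennreal (e j \<omega>) \<partial>M)"
    proof -
      have "(\<integral>\<^sup>+\<omega>. ennreal ((1 / real N) * (\<Sum>j<N. e j \<omega>)) \<partial>M)
          = (\<integral>\<^sup>+\<omega>. ennreal (1 / real N) * (\<Sum>j<N. ennreal (e j \<omega>)) \<partial>M)"
      proof (rule nn_integral_cong)
        fix \<omega>
        have sn: "0 \<le> (\<Sum>j<N. e j \<omega>)" using e0 by (simp add: sum_nonneg)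
        have "ennreal ((1 / real N) * (\<Sum>j<N. e j \<omega>)) = ennreal (1 / real N) * ennreal (\<Sum>j<N. e j \<omega>)"
          by (rule ennreal_mult) (use sn in simp_all)
        also have "ennreal (\<Sum>j<N. e j \<omega>) = (\<Sum>j<N. ennreal (e j \<omega>))"
          using e0 by (simp add: sum_ennreal)
        finally show "ennreal ((1 / real N) * (\<Sum>j<N. e j \<omega>)) = ennreal (1 / real N) * (\<Sum>j<N. ennreal (e j \<omega>))" .
      qed
      also have "\<dots> = ennreal (1 / real N) * (\<integral>\<^sup>+\<omega>. (\<Sum>j<N. ennreal (e j \<omega>)) \<partial>M)"
        using mew by (intro nn_integral_cmult) simp
      also have "(\<integral>\<^sup>+\<omega>. (\<Sum>j<N. ennreal (e j \<omega>)) \<partial>M) = (\<Sum>j<N. \<integral>\<^sup>+\<omega>. ennreal (e j \<omega>) \<partial>M)"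
        using mew by (intro nn_integral_sum) simp
      finally show ?thesis .
    qed
    also have "ennreal (1 / real N) * (\<Sum>j<N. \<integral>\<^sup>+\<omega>. ennreal (e j \<omega>) \<partial>M) \<le> ennreal (1 / real N) * ennreal (D * s * r)"
      using claimC by (rule mult_left_mono) simp
    also have "\<dots> = ennreal (D * s * r / real N)"
      using N0 D0 s_pos r0 by (simp add: ennreal_mult[symmetric])
    finally have "(\<integral>\<^sup>+\<omega>. ennreal \<bar>gg \<omega> - f xstar\<bar> \<partial>M)
      \<le> ennreal (real N * M1\<^sup>2 / (2 * c * real N)) + ennreal (c / (2 * real N)) + ennreal (D * s * r / real N)"
      by (simp add: add_mono)
    also have "\<dots> = ennreal (real N * M1\<^sup>2 / (2 * c * real N) + c / (2 * real N) + D * s * r / real N)"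
      using N0 c0 D0 s_pos r0 by (simp add: ennreal_plus)
    also have "real N * M1\<^sup>2 / (2 * c * real N) + c / (2 * real N) + D * s * r / real N = (M1 + D * s) / r"
      unfolding c_def rN[symmetric] by (rule real_id2[OF M1_pos r0])
    finally show ?thesis .
  qed
  show ?thesis
    using final unfolding Let_def gg_def xx_def \<gamma>_def s_def D_def r_def .
qed

end
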